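(* Let $N$ and $i$ be positive integers such that $N$ is a multiple of both $i$ and $i+1$, and let $q$ be an integer with $N/(i+1)<q\le N/i$ (necessarily $q\ge 2$). Then the map $$F_i\to F_N^{1/q,\,1/(q-1)},\qquad \frac{h}{k}\mapsto \frac{k}{kq-h}$$ (with $h/k$ in lowest terms) is a well-defined, order-preserving bijection.
   Context: For a positive integer $N$, the Farey sequence of order $N$, $F_N$, is the increasing list of all reduced fractions $h/k$ with $0\le h\le k\le N$ and $\gcd(h,k)=1$; it begins with $0/1$ and ends with $1/1$. For integers $1\le b\le a\le N$, $F_N^{1/a,\,1/b}$ denotes the subsequence of $F_N$ consisting of all its fractions lying in the closed interval $[1/a,\,1/b]$. *)

theory Defs
  imports Complex_Main
begin

text \<open>Farey sequence of order N, as the set of rationals h/k in [0,1] whose reduced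
  denominator k is at most N (ordered by the usual order on rat).\<close>
definition farey :: "nat \<Rightarrow> rat set" where
  "farey N = {r. 0 \<le> r \<and> r \<le> 1 \<and> snd (quotient_of r) \<le> int N}"

definition farey_sub :: "nat \<Rightarrow> int \<Rightarrow> int \<Rightarrow> rat set" where
  "farey_sub N a b = {r \<in> farey N. 1 / of_int a \<le> r \<and> r \<le> 1 / of_int b}"

definition farey_map :: "int \<Rightarrow> rat \<Rightarrow> rat" where
  "farey_map q r = (case quotient_of r of (h, k) \<Rightarrow> of_int k / of_int (k * q - h))"

end

theory Submission imports Defs begin
lemma denom_eq: "0 < k \<Longrightarrow> coprime h k \<Longrightarrow> quotient_of (of_int h / of_int k :: rat) = (h, k)"
  by (simp add: Fract_of_int_quotient[symmetric] quotient_of_Fract)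
lemma cop1: "coprime (h::int) k \<Longrightarrow> coprime k (k*q - h)"
  by (smt (verit, ccfv_SIG) coprime_imp_coprime dvd_add_right_iff dvd_mult2)
lemma cop2: "coprime (b::int) a \<Longrightarrow> coprime (q*a - b) a"
  by (smt (verit, ccfv_SIG) coprime_imp_coprime dvd_add_right_iff dvd_trans
    dvd_triv_right mult.commute)

lemma qdata: obtains h k where "quotient_of r = (h,k)" "k > 0" "coprime h k" "r = of_int h / of_int k"
  by (metis prod.exhaust quotient_of_coprime quotient_of_denom_pos quotient_of_div)

theorem theorem2:
  fixes N i :: nat and q :: int
  assumes "0 < N" and "0 < i" and "i dvd N" and "(i + 1) dvd N"
    and "of_nat N / of_nat (i + 1) < (of_int q :: rat)"
    and "(of_int q :: rat) \<le> of_nat N / of_nat i"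
  shows "bij_betw (farey_map q) (farey i) (farey_sub N q (q - 1))
         \<and> strict_mono_on (farey i) (farey_map q)"
proof -
  obtain m where m: "N = (i+1) * m" using assms(4) by blast
  have "of_nat N / of_nat (i + 1) = (of_nat m :: rat)" 
    unfolding m of_nat_mult by (metis nonzero_mult_div_cancel_left of_nat_eq_0_iff add_eq_0_iff_both_eq_0 one_neq_zero)
  hence "rat_of_int (int m) < of_int q" using assms(5) by simp
  hence qm: "int m + 1 \<le> q" by linarith
  have "m \<ge> 1" using m assms(1) by (cases m) auto
  have iq: "int i * q \<le> int N"
  proof -
    have "rat_of_int q * of_nat i \<le> of_nat N" using assms(6) assms(2) by (simp add: field_simps)
    hence "rat_of_int (q * int i) \<le> rat_of_int (int N)" by simp
    thus ?thesis by (simp only: of_int_le_iff mult.commute)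
  qed
  have q2: "q \<ge> 2" using qm \<open>m \<ge> 1\<close> by linarith
  have fm: "farey_map q r = 1 / (of_int q - r)" and den: "snd (quotient_of (farey_map q r)) \<le> int N"
    if r: "r \<in> farey i" for r
  proof -
    obtain h k where hk: "quotient_of r = (h,k)" "k > 0" "coprime h k" "r = of_int h / of_int k"
      by (rule qdata)
    have "0 \<le> r" "r \<le> 1" "k \<le> int i" using r hk(1) by (auto simp: farey_def)
    hence "h \<le> k" using hk by (simp add: divide_le_eq_1)
    have pos: "k*q - h > 0"
    proof -
      have "k * q \<ge> k * 2" using q2 hk(2) by simp
      thus ?thesis using \<open>h \<le> k\<close> hk(2) by linarith
    qed
    have e: "farey_map q r = of_int k / of_int (k*q - h)" by (simp add: farey_map_def hk(1))
    have "(of_int k / of_int (k*q - h) :: rat) = 1 / (of_int q - of_int h / of_int k)"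
      using hk(2) pos by (simp add: field_simps)
    thus "farey_map q r = 1 / (of_int q - r)" using e hk(4) by simp
    have "quotient_of (farey_map q r) = (k, k*q-h)" unfolding e
      using denom_eq[OF pos cop1[OF hk(3)]] .
    moreover have "k*q - h \<le> int N"
    proof -
      have "k*q \<le> int i * q" using \<open>k \<le> int i\<close> q2 by (simp add: mult_right_mono)
      moreover have "h \<ge> 0" using \<open>0 \<le> r\<close> hk by (simp add: zero_le_divide_iff)
      ultimately show ?thesis using iq by linarith
    qed
    ultimately show "snd (quotient_of (farey_map q r)) \<le> int N" by simp
  qed
  have rng: "r \<in> farey i \<Longrightarrow> 0 \<le> r \<and> r \<le> 1" for r by (simp add: farey_def)
  have mono: "strict_mono_on (farey i) (farey_map q)"
  proof (rule strict_mono_onI)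
    fix r s assume "r \<in> farey i" "s \<in> farey i" "r < s"
    moreover have "s < of_int q" using rng[OF \<open>s \<in> farey i\<close>] q2 by linarith
    ultimately show "farey_map q r < farey_map q s"
      by (simp add: fm frac_less2)
  qed
  have img: "farey_map q ` farey i = farey_sub N q (q - 1)"
  proof
    show "farey_map q ` farey i \<subseteq> farey_sub N q (q - 1)"
    proof
      fix s assume "s \<in> farey_map q ` farey i"
      then obtain r where r: "r \<in> farey i" "s = farey_map q r" by blast
      have r01: "0 \<le> r" "r \<le> 1" using rng[OF r(1)] by auto
      have qq: "(2::rat) \<le> of_int q" using q2 by simp
      have s: "s = 1 / (of_int q - r)" using fm[OF r(1)] r(2) by simp
      have a: "1 / of_int q \<le> s" unfolding s using r01 qq by (intro divide_left_mono) auto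
      have b: "s \<le> 1 / of_int (q - 1)" unfolding s using r01 qq by (intro divide_left_mono) auto
      have "1 / rat_of_int (q - 1) \<le> 1" using qq by (simp add: divide_le_eq_1)
      hence c: "s \<le> 1" using b by linarith
      have d: "0 \<le> s" using r01 qq unfolding s by simp
      show "s \<in> farey_sub N q (q - 1)" using a b c d den[OF r(1)] r(2)
        by (simp add: farey_sub_def farey_def)
    qed
  next
    show "farey_sub N q (q - 1) \<subseteq> farey_map q ` farey i"
    proof
      fix s assume s: "s \<in> farey_sub N q (q - 1)"
      obtain a b where ab: "quotient_of s = (a,b)" "b > 0" "coprime a b" "s = of_int a / of_int b"
        by (rule qdata)
      have qq: "(2::rat) \<le> of_int q" using q2 by simp
      have s1: "1 / of_int q \<le> s" "s \<le> 1 / of_int (q - 1)" "b \<le> int N"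
        using s ab(1) by (auto simp: farey_sub_def farey_def)
      have "s > 0" proof -
        have "0 < 1 / rat_of_int q" using qq by simp
        thus ?thesis using s1(1) by linarith
      qed
      hence apos: "a > 0" using ab by (simp add: zero_less_divide_iff)
      have "rat_of_int b \<le> rat_of_int (a * q)" using s1(1) ab apos q2 by (simp add: field_simps)
      hence bq: "b \<le> a * q" by (simp only: of_int_le_iff)
      have "rat_of_int (a * (q - 1)) \<le> rat_of_int b" using s1(2) ab apos q2 by (simp add: field_simps)
      hence bq1: "a * (q - 1) \<le> b" by (simp only: of_int_le_iff)
      define r where "r = of_int (q*a - b) / (of_int a :: rat)"
      have qr: "quotient_of r = (q*a - b, a)" unfolding r_def
        by (rule denom_eq[OF apos cop2]) (use ab(3) in \<open>simp add: coprime_commute\<close>)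
      have ai: "a \<le> int i"
      proof (rule ccontr)
        assume "\<not> a \<le> int i"
        hence ai1: "a \<ge> int i + 1" by simp
        show False
        proof (cases "b = a * (q - 1)")
          case True
          hence "a dvd b" by simp
          hence "a = 1" using ab(3) apos using coprime_common_divisor_int[of a b a] by simp 
          thus False using ai1 assms(2) by simp
        next
          case False
          hence "b > a * (q - 1)" using bq1 by simp
          moreover have "a * (q-1) \<ge> (int i + 1) * int m"
            using ai1 qm \<open>m \<ge> 1\<close> by (intro mult_mono) auto
          ultimately show False using s1(3) m by (simp add: algebra_simps)
        qed
      qed
      have "rat_of_int b \<le> rat_of_int (a * q)" "rat_of_int (a * q) \<le> rat_of_int (a + b)"
        using bq bq1 by (simp only: of_int_le_iff; simp add: algebra_simps)+
      hence "0 \<le> r" "r \<le> 1" unfolding r_def using apos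
        by (auto simp: field_simps)
      hence rf: "r \<in> farey i" using qr ai by (simp add: farey_def)
      have "1 / (rat_of_int q - rat_of_int (q*a - b) / of_int a) = of_int a / of_int b"
        using apos ab(2) by (simp add: field_simps)
      hence "farey_map q r = s" using fm[OF rf] ab(4) r_def by simp
      thus "s \<in> farey_map q ` farey i" using rf by blast
    qed
  qed
  show ?thesis using mono img strict_mono_on_imp_inj_on by (auto simp: bij_betw_def)
qed
end
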